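(* Let $n\ge2$ and let $\boldsymbol x^*$ be a pure Nash equilibrium of $\mathcal L(n,S)$. If player $i$ is $\boldsymbol x^*$-balanced, then \[ \rho_i(\boldsymbol x^* )\le\rho_j(\boldsymbol x^* )\quad\text{for all } j\in N. \]
   Context: Network: $(V,E)$ is a finite connected graph with no vertex of degree $2$; each edge $e$ has a length $\lambda(e)>0$. $S$ is the metric measure space obtained by identifying each edge with a segment of length $\lambda(e)$, with length measure $\lambda$ and shortest-path distance $d$. Vertices have their graph degree, and points in the interior of an edge have degree $2$. Location game $\mathcal L(n,S)$ with player set $N=\{1,\dots,n\}$: each player chooses a point of $S$. Consumers are distributed according to $\lambda$, and each shops at a closest occupied location. Consumers equidistant from several closest occupied locations are split equally among those locations, and the share of a location is split equally among the players located there. The payoff $\rho_i(\boldsymbol x)$ is the mass of consumers attracted by player $i$. Nash equilibria are pure. For a profile $\boldsymbol x$ and $w\in S$: if $\operatorname{card}\{i: x_i=w\}=\operatorname{degree}(w)$, then every player located at $w$ is called $\boldsymbol x$-balanced and $w$ is called $\boldsymbol x$-saturated. *)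

theory Defs
  imports "HOL-Analysis.Analysis"
begin

text \<open>The graph has vertex set V and edge set E; each edge e has
  endpoints src e and tgt e (an arbitrary orientation, used only for coordinates)
  and length lam e > 0.  A point of S is either a vertex or an interior point of an
  edge e at coordinate r (distance r from src e), with 0 < r < lam e.\<close>

datatype ('v, 'e) pt = Vtx 'v | EPt 'e real

fun walk :: "'e set \<Rightarrow> ('e \<Rightarrow> 'v) \<Rightarrow> ('e \<Rightarrow> 'v) \<Rightarrow> 'v \<Rightarrow> 'e list \<Rightarrow> 'v \<Rightarrow> bool" where
  "walk E src tgt u [] w \<longleftrightarrow> u = w"
| "walk E src tgt u (e # es) w \<longleftrightarrow> e \<in> E \<and>
     ((src e = u \<and> walk E src tgt (tgt e) es w) \<or> (tgt e = u \<and> walk E src tgt (src e) es w))"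

definition network :: "'v set \<Rightarrow> 'e set \<Rightarrow> ('e \<Rightarrow> 'v) \<Rightarrow> ('e \<Rightarrow> 'v) \<Rightarrow> ('e \<Rightarrow> real) \<Rightarrow> bool" where
  "network V E src tgt lam \<longleftrightarrow> finite V \<and> finite E \<and> V \<noteq> {} \<and>
     (\<forall>e\<in>E. src e \<in> V \<and> tgt e \<in> V \<and> src e \<noteq> tgt e \<and> lam e > 0) \<and>
     (\<forall>e\<in>E. \<forall>e'\<in>E. {src e, tgt e} = {src e', tgt e'} \<longrightarrow> e = e') \<and>
     (\<forall>u\<in>V. \<forall>w\<in>V. \<exists>es. walk E src tgt u es w)"

definition vertex_degree :: "'e set \<Rightarrow> ('e \<Rightarrow> 'v) \<Rightarrow> ('e \<Rightarrow> 'v) \<Rightarrow> 'v \<Rightarrow> nat" where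
  "vertex_degree E src tgt v = card {e \<in> E. src e = v \<or> tgt e = v}"

fun point_degree :: "'e set \<Rightarrow> ('e \<Rightarrow> 'v) \<Rightarrow> ('e \<Rightarrow> 'v) \<Rightarrow> ('v, 'e) pt \<Rightarrow> nat" where
  "point_degree E src tgt (Vtx v) = vertex_degree E src tgt v"
| "point_degree E src tgt (EPt e r) = 2"

fun in_S :: "'v set \<Rightarrow> 'e set \<Rightarrow> ('e \<Rightarrow> real) \<Rightarrow> ('v, 'e) pt \<Rightarrow> bool" where
  "in_S V E lam (Vtx v) \<longleftrightarrow> v \<in> V"
| "in_S V E lam (EPt e r) \<longleftrightarrow> e \<in> E \<and> 0 < r \<and> r < lam e"

definition vdist :: "'e set \<Rightarrow> ('e \<Rightarrow> 'v) \<Rightarrow> ('e \<Rightarrow> 'v) \<Rightarrow> ('e \<Rightarrow> real) \<Rightarrow> 'v \<Rightarrow> 'v \<Rightarrow> real" where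
  "vdist E src tgt lam u w = Inf {sum_list (map lam es) | es. walk E src tgt u es w}"

fun exits :: "('e \<Rightarrow> 'v) \<Rightarrow> ('e \<Rightarrow> 'v) \<Rightarrow> ('e \<Rightarrow> real) \<Rightarrow> ('v, 'e) pt \<Rightarrow> ('v \<times> real) set" where
  "exits src tgt lam (Vtx v) = {(v, 0)}"
| "exits src tgt lam (EPt e r) = {(src e, r), (tgt e, lam e - r)}"

definition pdist :: "'e set \<Rightarrow> ('e \<Rightarrow> 'v) \<Rightarrow> ('e \<Rightarrow> 'v) \<Rightarrow> ('e \<Rightarrow> real) \<Rightarrow> ('v, 'e) pt \<Rightarrow> ('v, 'e) pt \<Rightarrow> real" where
  "pdist E src tgt lam p q =
    (let via = Min {a + vdist E src tgt lam u w + b | u a w b.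
                      (u, a) \<in> exits src tgt lam p \<and> (w, b) \<in> exits src tgt lam q}
     in (case (p, q) of
           (EPt e r, EPt e' r') \<Rightarrow> (if e = e' then min \<bar>r - r'\<bar> via else via)
         | _ \<Rightarrow> via))"

definition edge_pt :: "('e \<Rightarrow> 'v) \<Rightarrow> ('e \<Rightarrow> 'v) \<Rightarrow> ('e \<Rightarrow> real) \<Rightarrow> 'e \<Rightarrow> real \<Rightarrow> ('v, 'e) pt" where
  "edge_pt src tgt lam e r =
     (if r \<le> 0 then Vtx (src e) else if lam e \<le> r then Vtx (tgt e) else EPt e r)"

text \<open>The share of player i of
  the consumer at y: the consumer is split equally among the closest occupied locations,
  and each location's share is split equally among the players located there.\<close>
definition share :: "'e set \<Rightarrow> ('e \<Rightarrow> 'v) \<Rightarrow> ('e \<Rightarrow> 'v) \<Rightarrow> ('e \<Rightarrow> real) \<Rightarrow> nat \<Rightarrow>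
     (nat \<Rightarrow> ('v, 'e) pt) \<Rightarrow> nat \<Rightarrow> ('v, 'e) pt \<Rightarrow> real" where
  "share E src tgt lam n x i y =
    (let d = pdist E src tgt lam;
         D = Min ((\<lambda>k. d y (x k)) ` {1..n});
         C = {x k | k. k \<in> {1..n} \<and> d y (x k) = D}
     in if d y (x i) = D
        then 1 / (real (card C) * real (card {k \<in> {1..n}. x k = x i}))
        else 0)"

definition payoff :: "'e set \<Rightarrow> ('e \<Rightarrow> 'v) \<Rightarrow> ('e \<Rightarrow> 'v) \<Rightarrow> ('e \<Rightarrow> real) \<Rightarrow> nat \<Rightarrow>
     (nat \<Rightarrow> ('v, 'e) pt) \<Rightarrow> nat \<Rightarrow> real" where
  "payoff E src tgt lam n x i =
     (\<Sum>e\<in>E. LINT r:{0..lam e}|lborel. share E src tgt lam n x i (edge_pt src tgt lam e r))"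

definition is_NE :: "'v set \<Rightarrow> 'e set \<Rightarrow> ('e \<Rightarrow> 'v) \<Rightarrow> ('e \<Rightarrow> 'v) \<Rightarrow> ('e \<Rightarrow> real) \<Rightarrow> nat \<Rightarrow>
     (nat \<Rightarrow> ('v, 'e) pt) \<Rightarrow> bool" where
  "is_NE V E src tgt lam n x \<longleftrightarrow>
     (\<forall>i\<in>{1..n}. in_S V E lam (x i)) \<and>
     (\<forall>i\<in>{1..n}. \<forall>y. in_S V E lam y \<longrightarrow>
        payoff E src tgt lam n (x(i := y)) i \<le> payoff E src tgt lam n x i)"

definition balanced :: "'e set \<Rightarrow> ('e \<Rightarrow> 'v) \<Rightarrow> ('e \<Rightarrow> 'v) \<Rightarrow> nat \<Rightarrow> (nat \<Rightarrow> ('v, 'e) pt) \<Rightarrow> nat \<Rightarrow> bool" where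
  "balanced E src tgt n x i \<longleftrightarrow>
     i \<in> {1..n} \<and> card {k \<in> {1..n}. x k = x i} = point_degree E src tgt (x i)"

end

theory Submission
  imports Defs "HOL-Analysis.Analysis"
begin


lemma walk_set: "walk E src tgt u es w \<Longrightarrow> set es \<subseteq> E"
  by (induction es arbitrary: u) auto

lemma walk_snoc: "walk E src tgt u (es @ [e]) w \<longleftrightarrow>
   (\<exists>z. walk E src tgt u es z \<and> e \<in> E \<and> ((src e = z \<and> tgt e = w) \<or> (tgt e = z \<and> src e = w)))"
  by (induction es arbitrary: u) auto

definition viaD :: "'e set \<Rightarrow> ('e \<Rightarrow> 'v) \<Rightarrow> ('e \<Rightarrow> 'v) \<Rightarrow> ('e \<Rightarrow> real) \<Rightarrow> ('v, 'e) pt \<Rightarrow> ('v, 'e) pt \<Rightarrow> real" where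
  "viaD E src tgt lam p q = Min {a + vdist E src tgt lam u w + b | u a w b.
                      (u, a) \<in> exits src tgt lam p \<and> (w, b) \<in> exits src tgt lam q}"

lemma pdist_alt: "pdist E src tgt lam p q = (case (p, q) of
           (EPt e r, EPt e' r') \<Rightarrow> (if e = e' then min \<bar>r - r'\<bar> (viaD E src tgt lam p q) else viaD E src tgt lam p q)
         | _ \<Rightarrow> viaD E src tgt lam p q)"
  unfolding pdist_def viaD_def Let_def by simp

lemma exits_fin: "finite (exits src tgt lam p)" "exits src tgt lam p \<noteq> {}"
  by (cases p; simp)+

lemma via_set_eq: "{a + vdist E src tgt lam u w + b | u a w b.
                      (u, a) \<in> exits src tgt lam p \<and> (w, b) \<in> exits src tgt lam q}
   = (\<lambda>((u,a),(w,b)). a + vdist E src tgt lam u w + b) ` (exits src tgt lam p \<times> exits src tgt lam q)"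
proof (rule set_eqI, rule iffI)
  fix x assume "x \<in> {a + vdist E src tgt lam u w + b | u a w b.
                      (u, a) \<in> exits src tgt lam p \<and> (w, b) \<in> exits src tgt lam q}"
  then obtain u a w b where "(u, a) \<in> exits src tgt lam p" "(w, b) \<in> exits src tgt lam q"
    "x = a + vdist E src tgt lam u w + b" by blast
  then show "x \<in> (\<lambda>((u,a),(w,b)). a + vdist E src tgt lam u w + b) ` (exits src tgt lam p \<times> exits src tgt lam q)"
    by (intro image_eqI[where x="((u,a),(w,b))"]) auto
qed auto

lemma via_le: "(u,a) \<in> exits src tgt lam p \<Longrightarrow> (w,b) \<in> exits src tgt lam q \<Longrightarrow>
   viaD E src tgt lam p q \<le> a + vdist E src tgt lam u w + b"
  unfolding viaD_def via_set_eq
  by (rule Min_le) (auto simp: exits_fin intro!: image_eqI[where x="((u,a),(w,b))"])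

lemma via_att: "\<exists>u a w b. (u,a) \<in> exits src tgt lam p \<and> (w,b) \<in> exits src tgt lam q \<and>
   viaD E src tgt lam p q = a + vdist E src tgt lam u w + b"
proof -
  have "viaD E src tgt lam p q \<in> (\<lambda>((u,a),(w,b)). a + vdist E src tgt lam u w + b) ` (exits src tgt lam p \<times> exits src tgt lam q)"
    unfolding viaD_def via_set_eq by (rule Min_in) (auto simp: exits_fin)
  then show ?thesis by auto
qed

lemma pdist_le_via: "pdist E src tgt lam p q \<le> viaD E src tgt lam p q"
  unfolding pdist_alt by (cases p; cases q; auto)

lemma pdist_same_le: "pdist E src tgt lam (EPt e r) (EPt e r') \<le> \<bar>r - r'\<bar>"
  unfolding pdist_alt by auto

lemma pdist_cases: "pdist E src tgt lam p q = viaD E src tgt lam p q \<or>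
   (\<exists>e r r'. p = EPt e r \<and> q = EPt e r' \<and> pdist E src tgt lam p q = \<bar>r - r'\<bar>)"
  unfolding pdist_alt by (cases p; cases q; auto simp: min_def)

context
  fixes V :: "'v set" and E :: "'e set" and src tgt :: "'e \<Rightarrow> 'v" and lam :: "'e \<Rightarrow> real"
  assumes net: "network V E src tgt lam"
begin

lemma len_nonneg: "walk E src tgt u es w \<Longrightarrow> 0 \<le> sum_list (map lam es)"
proof -
  assume "walk E src tgt u es w"
  then have "set es \<subseteq> E" by (rule walk_set)
  moreover have "\<forall>e\<in>E. lam e > 0" using net unfolding network_def by auto
  ultimately show ?thesis by (intro sum_list_nonneg) fastforce
qed

lemma walk_ex: "u \<in> V \<Longrightarrow> w \<in> V \<Longrightarrow> \<exists>es. walk E src tgt u es w"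
  using net unfolding network_def by auto

lemma vd_nonneg: "u \<in> V \<Longrightarrow> w \<in> V \<Longrightarrow> 0 \<le> vdist E src tgt lam u w"
  unfolding vdist_def
  by (rule cInf_greatest) (use walk_ex len_nonneg in auto)

lemma vd_le: "walk E src tgt u es w \<Longrightarrow> vdist E src tgt lam u w \<le> sum_list (map lam es)"
  unfolding vdist_def
  by (rule cInf_lower) (auto simp: bdd_below_def intro!: exI[of _ 0] len_nonneg)

lemma bellman:
  assumes "u \<in> V" "v \<in> V" "u \<noteq> v"
  shows "\<exists>e\<in>E. (src e = v \<or> tgt e = v) \<and>
     vdist E src tgt lam u (if src e = v then tgt e else src e) + lam e \<le> vdist E src tgt lam u v"
proof -
  define I where "I = {e\<in>E. src e = v \<or> tgt e = v}"
  define g where "g e = vdist E src tgt lam u (if src e = v then tgt e else src e) + lam e" for e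
  have fin: "finite I" using net unfolding network_def I_def by auto
  have neq: "\<forall>e\<in>E. src e \<noteq> tgt e" using net unfolding network_def by auto
  have key: "\<exists>e\<in>I. g e \<le> sum_list (map lam es)" if W: "walk E src tgt u es v" for es
  proof -
    have "es \<noteq> []" using W assms(3) by auto
    then obtain es' e where es: "es = es' @ [e]" by (metis rev_exhaust)
    with W obtain z where z: "walk E src tgt u es' z" "e \<in> E"
      "(src e = z \<and> tgt e = v) \<or> (tgt e = z \<and> src e = v)" by (auto simp: walk_snoc)
    have eI: "e \<in> I" using z unfolding I_def by auto
    have "z = (if src e = v then tgt e else src e)" using z neq by auto
    then have "g e \<le> sum_list (map lam es') + lam e" unfolding g_def using vd_le[OF z(1)] by simp
    also have "\<dots> = sum_list (map lam es)" using es by simp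
    finally show ?thesis using eI by blast
  qed
  obtain es0 where es0: "walk E src tgt u es0 v" using walk_ex assms by blast
  have Ine: "I \<noteq> {}" using key[OF es0] by auto
  define m where "m = Min (g ` I)"
  have "m \<in> g ` I" unfolding m_def using fin Ine by (intro Min_in) auto
  then obtain e0 where e0: "e0 \<in> I" "g e0 = m" by auto
  have "m \<le> vdist E src tgt lam u v" unfolding vdist_def
  proof (rule cInf_greatest)
    show "{sum_list (map lam es) |es. walk E src tgt u es v} \<noteq> {}" using es0 by auto
  next
    fix l assume "l \<in> {sum_list (map lam es) |es. walk E src tgt u es v}"
    then obtain es where "walk E src tgt u es v" "l = sum_list (map lam es)" by auto
    with key obtain e where "e \<in> I" "g e \<le> l" by blast
    then show "m \<le> l" unfolding m_def using fin by (meson Min_le finite_imageI image_eqI order_trans)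
  qed
  then have "e0 \<in> E" "src e0 = v \<or> tgt e0 = v" "g e0 \<le> vdist E src tgt lam u v"
    using e0 unfolding I_def by auto
  then show ?thesis unfolding g_def by blast
qed

lemma exits_props: "in_S V E lam p \<Longrightarrow> (u,a) \<in> exits src tgt lam p \<Longrightarrow> u \<in> V \<and> 0 \<le> a"
  using net unfolding network_def by (cases p) auto

lemma via_lower:
  assumes "in_S V E lam p" "in_S V E lam q" "\<And>u a. (u,a) \<in> exits src tgt lam p \<Longrightarrow> d < a"
  shows "d < viaD E src tgt lam p q"
proof -
  obtain u a w b where uw: "(u,a) \<in> exits src tgt lam p" "(w,b) \<in> exits src tgt lam q"
   "viaD E src tgt lam p q = a + vdist E src tgt lam u w + b"
    using via_att[where E=E and src=src and tgt=tgt and lam=lam and p=p and q=q] by blast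
  have "0 \<le> vdist E src tgt lam u w" "0 \<le> b"
    using exits_props[OF assms(1) uw(1)] exits_props[OF assms(2) uw(2)] vd_nonneg by auto
  then show ?thesis using uw assms(3)[OF uw(1)] by linarith
qed

lemma pdist_lower:
  assumes "e \<in> E" "in_S V E lam q" "d < r" "r < lam e - d" "0 \<le> d"
    "\<And>r'. q = EPt e r' \<Longrightarrow> d < \<bar>r - r'\<bar>"
  shows "d < pdist E src tgt lam (EPt e r) q"
proof -
  have pS: "in_S V E lam (EPt e r)" using assms net unfolding network_def by auto
  have "d < viaD E src tgt lam (EPt e r) q"
    by (rule via_lower[OF pS assms(2)]) (use assms in auto)
  then show ?thesis using pdist_cases[of E src tgt lam "EPt e r" q] assms(6) by auto
qed

lemma vd_self: "v \<in> V \<Longrightarrow> vdist E src tgt lam v v = 0"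
  using vd_nonneg[of v v] vd_le[of v "[]" v] by simp

lemma branch_vertex:
  assumes v: "v \<in> V" and y: "in_S V E lam y" and dpos: "0 < d" and dl: "\<forall>e\<in>E. d < lam e"
    and far: "d \<le> pdist E src tgt lam y (Vtx v)"
  shows "\<exists>e\<in>E. (src e = v \<or> tgt e = v) \<and>
     pdist E src tgt lam y (if src e = v then EPt e d else EPt e (lam e - d)) < pdist E src tgt lam y (Vtx v)"
proof -
  have neq: "\<forall>e\<in>E. src e \<noteq> tgt e" using net unfolding network_def by auto
  have pv: "pdist E src tgt lam y (Vtx v) = viaD E src tgt lam y (Vtx v)"
    using pdist_cases[of E src tgt lam y "Vtx v"] by auto
  obtain u a w b where uw: "(u,a) \<in> exits src tgt lam y" "(w,b) \<in> exits src tgt lam (Vtx v)"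
   "viaD E src tgt lam y (Vtx v) = a + vdist E src tgt lam u w + b"
    using via_att[where E=E and src=src and tgt=tgt and lam=lam and p=y and q="Vtx v"] by blast
  have wb: "w = v" "b = 0" using uw(2) by auto
  have uV: "u \<in> V" and a0: "0 \<le> a" using exits_props[OF y uw(1)] by auto
  show ?thesis
  proof (cases "u = v")
    case True
    then have dd: "pdist E src tgt lam y (Vtx v) = a" using pv uw(3) wb vd_self[OF v] by simp
    show ?thesis
    proof (cases y)
      case (Vtx x)
      then show ?thesis using uw(1) dd far dpos by auto
    next
      case (EPt e r)
      have eE: "e \<in> E" using y EPt by simp
      have "(u,a) = (src e, r) \<or> (u,a) = (tgt e, lam e - r)" using uw(1) EPt by auto
      then show ?thesis
      proof
        assume h: "(u,a) = (src e, r)"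
        then have "src e = v" using True by simp
        moreover have "pdist E src tgt lam y (EPt e d) < pdist E src tgt lam y (Vtx v)"
          using pdist_same_le[of E src tgt lam e r d] EPt dd h far dpos by auto
        ultimately show ?thesis using eE by auto
      next
        assume h: "(u,a) = (tgt e, lam e - r)"
        then have "tgt e = v" "src e \<noteq> v" using True neq eE by auto
        moreover have "pdist E src tgt lam y (EPt e (lam e - d)) < pdist E src tgt lam y (Vtx v)"
          using pdist_same_le[of E src tgt lam e r "lam e - d"] EPt dd h far dpos by auto
        ultimately show ?thesis using eE by auto
      qed
    qed
  next
    case False
    obtain e where e: "e \<in> E" "src e = v \<or> tgt e = v"
      "vdist E src tgt lam u (if src e = v then tgt e else src e) + lam e \<le> vdist E src tgt lam u v"
      using bellman[OF uV v False] by blast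
    define p :: "('v,'e) pt" where "p = (if src e = v then EPt e d else EPt e (lam e - d))"
    have ex: "((if src e = v then tgt e else src e), lam e - d) \<in> exits src tgt lam p"
      unfolding p_def by auto
    have "pdist E src tgt lam y p \<le> a + vdist E src tgt lam u (if src e = v then tgt e else src e) + (lam e - d)"
      using pdist_le_via[of E src tgt lam y p] via_le[OF uw(1) ex, of E] by linarith
    also have "\<dots> < pdist E src tgt lam y (Vtx v)" using e(3) pv uw(3) wb dpos by simp
    finally have "pdist E src tgt lam y p < pdist E src tgt lam y (Vtx v)" .
    then show ?thesis using e(1,2) unfolding p_def by blast
  qed
qed

lemma branch_interior:
  assumes e0: "e0 \<in> E" and y: "in_S V E lam y" and dpos: "0 < d" and d1: "d < r0" and d2: "d < lam e0 - r0"
    and far: "d \<le> pdist E src tgt lam y (EPt e0 r0)"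
  shows "pdist E src tgt lam y (EPt e0 (r0 - d)) < pdist E src tgt lam y (EPt e0 r0) \<or>
         pdist E src tgt lam y (EPt e0 (r0 + d)) < pdist E src tgt lam y (EPt e0 r0)"
proof (cases "pdist E src tgt lam y (EPt e0 r0) = viaD E src tgt lam y (EPt e0 r0)")
  case True
  obtain u a w b where uw: "(u,a) \<in> exits src tgt lam y" "(w,b) \<in> exits src tgt lam (EPt e0 r0)"
   "viaD E src tgt lam y (EPt e0 r0) = a + vdist E src tgt lam u w + b"
    using via_att[where E=E and src=src and tgt=tgt and lam=lam and p=y and q="EPt e0 r0"] by blast
  have "(w,b) = (src e0, r0) \<or> (w,b) = (tgt e0, lam e0 - r0)" using uw(2) by auto
  then show ?thesis
  proof
    assume h: "(w,b) = (src e0, r0)"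
    have ex: "(src e0, r0 - d) \<in> exits src tgt lam (EPt e0 (r0 - d))" by simp
    have "pdist E src tgt lam y (EPt e0 (r0 - d)) \<le> a + vdist E src tgt lam u (src e0) + (r0 - d)"
      by (rule order_trans[OF pdist_le_via via_le[OF uw(1) ex]])
    then show ?thesis using True uw(3) h dpos by auto
  next
    assume h: "(w,b) = (tgt e0, lam e0 - r0)"
    have ex: "(tgt e0, lam e0 - r0 - d) \<in> exits src tgt lam (EPt e0 (r0 + d))" by simp
    have "pdist E src tgt lam y (EPt e0 (r0 + d)) \<le> a + vdist E src tgt lam u (tgt e0) + (lam e0 - r0 - d)"
      by (rule order_trans[OF pdist_le_via via_le[OF uw(1) ex]])
    then show ?thesis using True uw(3) h dpos by auto
  qed
next
  case False
  then obtain r where r: "y = EPt e0 r" "pdist E src tgt lam y (EPt e0 r0) = \<bar>r - r0\<bar>"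
    using pdist_cases[of E src tgt lam y "EPt e0 r0"] by auto
  show ?thesis
  proof (cases "r < r0")
    case True
    then show ?thesis using pdist_same_le[of E src tgt lam e0 r "r0 - d"] r far dpos by auto
  next
    case False
    then show ?thesis using pdist_same_le[of E src tgt lam e0 r "r0 + d"] r far dpos by auto
  qed
qed

end


lemma share_nonneg: "0 \<le> share E src tgt lam n x i y"
  unfolding share_def Let_def by simp

lemma share_le:
  assumes "i \<in> {1..n}"
  shows "share E src tgt lam n x i y \<le> 1 / real (card {k \<in> {1..n}. x k = x i})"
proof -
  define D where "D = Min ((\<lambda>k. pdist E src tgt lam y (x k)) ` {1..n})"
  define C where "C = {x k | k. k \<in> {1..n} \<and> pdist E src tgt lam y (x k) = D}"
  have finC: "finite C" unfolding C_def by simp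
  have m1: "1 \<le> card {k \<in> {1..n}. x k = x i}"
  proof -
    have "{k \<in> {1..n}. x k = x i} \<noteq> {}" using assms by auto
    then show ?thesis by (simp add: Suc_le_eq card_gt_0_iff)
  qed
  show ?thesis
  proof (cases "pdist E src tgt lam y (x i) = D")
    case True
    then have "x i \<in> C" unfolding C_def using assms by blast
    then have "1 \<le> card C" using finC by (simp add: Suc_le_eq card_gt_0_iff) blast
    then have "1 / (real (card C) * real (card {k \<in> {1..n}. x k = x i}))
       \<le> 1 / real (card {k \<in> {1..n}. x k = x i})" using m1
      by (intro divide_left_mono) (auto intro!: mult_pos_pos)
    then show ?thesis using True unfolding share_def Let_def D_def[symmetric] C_def[symmetric] by simp
  next
    case False
    then show ?thesis unfolding share_def Let_def D_def[symmetric] by simp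
  qed
qed

lemma share_pos_min:
  assumes "i \<in> {1..n}" "0 < share E src tgt lam n x i y" "k \<in> {1..n}"
  shows "pdist E src tgt lam y (x i) \<le> pdist E src tgt lam y (x k)"
proof -
  define D where "D = Min ((\<lambda>k. pdist E src tgt lam y (x k)) ` {1..n})"
  have "pdist E src tgt lam y (x i) = D"
    using assms(2) unfolding share_def Let_def D_def[symmetric] by (auto split: if_splits)
  moreover have "D \<le> pdist E src tgt lam y (x k)" unfolding D_def using assms(3) by simp
  ultimately show ?thesis by simp
qed

lemma share_one:
  assumes j: "j \<in> {1..n}" and lt: "\<forall>k\<in>{1..n}. k \<noteq> j \<longrightarrow> pdist E src tgt lam y p < pdist E src tgt lam y (x k)"
  shows "share E src tgt lam n (x(j := p)) j y = 1"
proof -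
  let ?x = "x(j := p)"
  define D where "D = Min ((\<lambda>k. pdist E src tgt lam y (?x k)) ` {1..n})"
  have D: "D = pdist E src tgt lam y p"
    unfolding D_def
  proof (rule Min_eqI)
    show "pdist E src tgt lam y p \<in> (\<lambda>k. pdist E src tgt lam y (?x k)) ` {1..n}"
      using j by (intro image_eqI[where x=j]) auto
  next
    fix z assume "z \<in> (\<lambda>k. pdist E src tgt lam y (?x k)) ` {1..n}"
    then obtain k where "k \<in> {1..n}" "z = pdist E src tgt lam y (?x k)" by auto
    then show "pdist E src tgt lam y p \<le> z" using lt by (cases "k = j") (auto intro: less_imp_le)
  qed simp
  have C: "{?x k | k. k \<in> {1..n} \<and> pdist E src tgt lam y (?x k) = D} = {p}"
  proof -
    have "k = j" if "k \<in> {1..n}" "pdist E src tgt lam y (?x k) = D" for k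
      using that lt D by (cases "k = j") auto
    then show ?thesis using j D by auto
  qed
  have K: "{k \<in> {1..n}. ?x k = ?x j} = {j}"
  proof -
    have "k = j" if "k \<in> {1..n}" "?x k = p" for k
      using that lt by (cases "k = j") auto
    then show ?thesis using j by auto
  qed
  show ?thesis unfolding share_def Let_def D_def[symmetric] C K using D by simp
qed



lemma via_EPt_eq: "viaD E src tgt lam (EPt e r) q =
  Min ((\<lambda>z. (\<lambda>(t,(w,b)) r. (if t then r + vdist E src tgt lam (src e) w
             else (lam e - r) + vdist E src tgt lam (tgt e) w) + b) z r) ` (UNIV \<times> exits src tgt lam q))"
proof -
  have "(\<lambda>((u,a),(w,b)). a + vdist E src tgt lam u w + b) ` (exits src tgt lam (EPt e r) \<times> exits src tgt lam q)
    = (\<lambda>z. (\<lambda>(t,(w,b)) r. (if t then r + vdist E src tgt lam (src e) w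
             else (lam e - r) + vdist E src tgt lam (tgt e) w) + b) z r) ` (UNIV \<times> exits src tgt lam q)"
  proof (rule set_eqI, rule iffI)
    fix z assume "z \<in> (\<lambda>((u,a),(w,b)). a + vdist E src tgt lam u w + b) ` (exits src tgt lam (EPt e r) \<times> exits src tgt lam q)"
    then obtain u a w b where h: "(u,a) \<in> exits src tgt lam (EPt e r)" "(w,b) \<in> exits src tgt lam q"
      "z = a + vdist E src tgt lam u w + b" by auto
    from h(1) have "(u,a) = (src e, r) \<or> (u,a) = (tgt e, lam e - r)" by auto
    then show "z \<in> (\<lambda>z. (\<lambda>(t,(w,b)) r. (if t then r + vdist E src tgt lam (src e) w
             else (lam e - r) + vdist E src tgt lam (tgt e) w) + b) z r) ` (UNIV \<times> exits src tgt lam q)"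
    proof
      assume "(u,a) = (src e, r)" then show ?thesis using h by (intro image_eqI[where x="(True,(w,b))"]) auto
    next
      assume "(u,a) = (tgt e, lam e - r)" then show ?thesis using h by (intro image_eqI[where x="(False,(w,b))"]) auto
    qed
  next
    fix z assume "z \<in> (\<lambda>z. (\<lambda>(t,(w,b)) r. (if t then r + vdist E src tgt lam (src e) w
             else (lam e - r) + vdist E src tgt lam (tgt e) w) + b) z r) ` (UNIV \<times> exits src tgt lam q)"
    then obtain t w b where h: "(w,b) \<in> exits src tgt lam q"
      "z = (if t then r + vdist E src tgt lam (src e) w
             else (lam e - r) + vdist E src tgt lam (tgt e) w) + b" by auto
    show "z \<in> (\<lambda>((u,a),(w,b)). a + vdist E src tgt lam u w + b) ` (exits src tgt lam (EPt e r) \<times> exits src tgt lam q)"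
    proof (cases t)
      case True then show ?thesis using h by (intro image_eqI[where x="((src e, r),(w,b))"]) auto
    next
      case False then show ?thesis using h by (intro image_eqI[where x="((tgt e, lam e - r),(w,b))"]) auto
    qed
  qed
  then show ?thesis unfolding viaD_def via_set_eq by simp
qed

lemma via_EPt_meas: "(\<lambda>r. viaD E src tgt lam (EPt e r) q) \<in> borel_measurable borel"
  unfolding via_EPt_eq
  by (rule borel_measurable_Min) (auto simp: exits_fin split: prod.splits)

lemma pdist_EPt_meas: "(\<lambda>r. pdist E src tgt lam (EPt e r) q) \<in> borel_measurable borel"
proof (cases q)
  case (Vtx v)
  then show ?thesis unfolding pdist_alt using via_EPt_meas by simp
next
  case (EPt e' r')
  have v: "(\<lambda>r. viaD E src tgt lam (EPt e r) q) \<in> borel_measurable borel" by (rule via_EPt_meas)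
  show ?thesis
  proof (cases "e = e'")
    case True
    have a: "(\<lambda>r. \<bar>r - r'\<bar>) \<in> borel_measurable (borel :: real measure)" by measurable
    have "(\<lambda>r. min \<bar>r - r'\<bar> (viaD E src tgt lam (EPt e r) q)) \<in> borel_measurable borel"
      using a v by (intro borel_measurable_min)
    then show ?thesis unfolding pdist_alt using EPt True by simp
  next
    case False
    then show ?thesis unfolding pdist_alt using EPt v by simp
  qed
qed

lemma pdist_edge_meas[measurable]: "(\<lambda>r. pdist E src tgt lam (edge_pt src tgt lam e r) q) \<in> borel_measurable borel"
proof -
  have "(\<lambda>r. pdist E src tgt lam (edge_pt src tgt lam e r) q) =
    (\<lambda>r. if r \<le> 0 then pdist E src tgt lam (Vtx (src e)) q else if lam e \<le> r then pdist E src tgt lam (Vtx (tgt e)) q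
       else pdist E src tgt lam (EPt e r) q)"
    unfolding edge_pt_def by auto
  then show ?thesis using pdist_EPt_meas[of E src tgt lam e q] by simp measurable
qed

lemma share_alt: "share E src tgt lam n x k y =
   (let D = Min ((\<lambda>k. pdist E src tgt lam y (x k)) ` {1..n}) in
    if pdist E src tgt lam y (x k) = D then
      1 / ((\<Sum>q\<in>x ` {1..n}. if pdist E src tgt lam y q = D then 1 else 0) * real (card {k' \<in> {1..n}. x k' = x k}))
    else 0)"
proof -
  have "{x k |k. k \<in> {1..n} \<and> pdist E src tgt lam y (x k) = D} = {q \<in> x ` {1..n}. pdist E src tgt lam y q = D}" for D
    by auto
  moreover have "real (card {q \<in> x ` {1..n}. pdist E src tgt lam y q = D}) = (\<Sum>q\<in>x ` {1..n}. if pdist E src tgt lam y q = D then 1 else 0)" for D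
    by (simp add: sum.inter_filter[symmetric])
  ultimately show ?thesis unfolding share_def Let_def by simp
qed

lemma share_meas[measurable]: "(\<lambda>r. share E src tgt lam n x k (edge_pt src tgt lam e r)) \<in> borel_measurable borel"
  unfolding share_alt Let_def by measurable



lemma sint_bdd:
  fixes f :: "real \<Rightarrow> real"
  assumes "f \<in> borel_measurable borel" "\<And>r. \<bar>f r\<bar> \<le> K"
  shows "set_integrable lborel {a..b} f"
proof (rule set_integrable_bound[where f="\<lambda>_. K"])
  show "set_integrable lborel {a..b} (\<lambda>_. K)"
    unfolding set_integrable_def
    using integrable_real_indicator[of "{a..b}" lborel] by (simp add: emeasure_lborel_Icc_eq)
  show "set_borel_measurable lborel {a..b} f"
    unfolding set_borel_measurable_def using assms(1) by (simp add: measurable_lborel2)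
  show "AE x in lborel. x \<in> {a..b} \<longrightarrow> norm (f x) \<le> norm K"
    using assms(2) by (auto intro: order_trans[OF _ abs_ge_self])
qed

lemma sint_sum:
  fixes g :: "'b \<Rightarrow> real \<Rightarrow> real"
  assumes "\<And>b. b \<in> B \<Longrightarrow> set_integrable M A (g b)"
  shows "set_integrable M A (\<lambda>r. \<Sum>b\<in>B. g b r)"
    "(LINT r:A|M. (\<Sum>b\<in>B. g b r)) = (\<Sum>b\<in>B. LINT r:A|M. g b r)"
  using assms unfolding set_integrable_def set_lebesgue_integral_def
  by (simp_all add: sum_distrib_left integral_sum)

lemma int_main:
  fixes f h :: "real \<Rightarrow> real" and g :: "'b \<Rightarrow> real \<Rightarrow> real"
  assumes "set_integrable lborel A f" "set_integrable lborel A h" "\<And>b. b \<in> B \<Longrightarrow> set_integrable lborel A (g b)"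
    and "\<And>r. r \<in> A \<Longrightarrow> m * f r \<le> (\<Sum>b\<in>B. g b r) + h r"
  shows "m * (LINT r:A|lborel. f r) \<le> (\<Sum>b\<in>B. LINT r:A|lborel. g b r) + (LINT r:A|lborel. h r)"
proof -
  have "m * (LINT r:A|lborel. f r) = (LINT r:A|lborel. m * f r)" by simp
  also have "\<dots> \<le> (LINT r:A|lborel. (\<Sum>b\<in>B. g b r) + h r)"
  proof (rule set_integral_mono)
    have "set_integrable lborel A (\<lambda>r. \<Sum>b\<in>B. g b r)" using assms(3) by (rule sint_sum)
    then show "set_integrable lborel A (\<lambda>r. (\<Sum>b\<in>B. g b r) + h r)" using assms(2) by (rule set_integral_add)
  qed (use assms in auto)
  also have "\<dots> = (\<Sum>b\<in>B. LINT r:A|lborel. g b r) + (LINT r:A|lborel. h r)"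
  proof -
    have i1: "set_integrable lborel A (\<lambda>r. \<Sum>b\<in>B. g b r)" using assms(3) by (rule sint_sum)
    have e1: "(LINT r:A|lborel. (\<Sum>b\<in>B. g b r)) = (\<Sum>b\<in>B. LINT r:A|lborel. g b r)"
      using assms(3) by (rule sint_sum)
    show ?thesis using set_integral_add(2)[OF i1 assms(2)] e1 by simp
  qed
  finally show ?thesis .
qed

lemma sint_ind:
  fixes a b c d :: real
  assumes "c \<le> d"
  shows "(LINT r:{a..b}|lborel. indicator {c..d} r) \<le> d - c"
proof -
  have "(LINT r:{a..b}|lborel. indicator {c..d} r :: real) = integral\<^sup>L lborel (indicator ({a..b} \<inter> {c..d}) :: real \<Rightarrow> real)"
    unfolding set_lebesgue_integral_def by (intro Bochner_Integration.integral_cong) (auto split: split_indicator)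
  also have "\<dots> = measure lborel ({a..b} \<inter> {c..d})" by simp
  also have "\<dots> \<le> measure lborel {c..d}"
    by (intro measure_mono_fmeasurable) (auto simp: fmeasurable_def emeasure_lborel_Icc_eq)
  also have "\<dots> = d - c" using assms by simp
  finally show ?thesis .
qed



context
  fixes V :: "'v set" and E :: "'e set" and src tgt :: "'e \<Rightarrow> 'v" and lam :: "'e \<Rightarrow> real"
  assumes net: "network V E src tgt lam"
begin

lemma edge_pt_in_S: "e \<in> E \<Longrightarrow> r \<in> {0..lam e} \<Longrightarrow> in_S V E lam (edge_pt src tgt lam e r)"
  using net unfolding network_def edge_pt_def by auto

lemma key_branch:
  assumes w: "in_S V E lam w" and dpos: "0 < d" and dl: "\<forall>e\<in>E. d < lam e"
    and dw: "\<And>e0 r0. w = EPt e0 r0 \<Longrightarrow> d < r0 \<and> d < lam e0 - r0"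
  shows "\<exists>P. finite P \<and> card P = point_degree E src tgt w \<and> (\<forall>p\<in>P. in_S V E lam p) \<and>
     (\<forall>y. in_S V E lam y \<longrightarrow> d \<le> pdist E src tgt lam y w \<longrightarrow> (\<exists>p\<in>P. pdist E src tgt lam y p < pdist E src tgt lam y w))"
proof (cases w)
  case (Vtx v)
  define I where "I = {e \<in> E. src e = v \<or> tgt e = v}"
  define f :: "'e \<Rightarrow> ('v,'e) pt" where "f e = (if src e = v then EPt e d else EPt e (lam e - d))" for e
  have finI: "finite I" using net unfolding network_def I_def by auto
  have inj: "inj_on f I" unfolding inj_on_def f_def by (auto split: if_splits)
  have vV: "v \<in> V" using w Vtx by simp
  show ?thesis
  proof (intro exI[of _ "f ` I"] conjI allI impI ballI)
    show "finite (f ` I)" using finI by simp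
    show "card (f ` I) = point_degree E src tgt w"
      using card_image[OF inj] Vtx unfolding I_def by (simp add: vertex_degree_def)
  next
    fix p assume "p \<in> f ` I"
    then obtain e where "e \<in> E" "p = f e" unfolding I_def by auto
    then show "in_S V E lam p" unfolding f_def using dl dpos by auto
  next
    fix y assume "in_S V E lam y" "d \<le> pdist E src tgt lam y w"
    then obtain e where "e \<in> E" "src e = v \<or> tgt e = v" "pdist E src tgt lam y (f e) < pdist E src tgt lam y w"
      using branch_vertex[OF net vV _ dpos dl] Vtx unfolding f_def by blast
    then show "\<exists>p\<in>f ` I. pdist E src tgt lam y p < pdist E src tgt lam y w" unfolding I_def by blast
  qed
next
  case (EPt e0 r0)
  have e0: "e0 \<in> E" using w EPt by simp
  have d12: "d < r0" "d < lam e0 - r0" using dw EPt by auto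
  define P :: "('v,'e) pt set" where "P = {EPt e0 (r0 - d), EPt e0 (r0 + d)}"
  show ?thesis
  proof (intro exI[of _ P] conjI allI impI ballI)
    show "finite P" unfolding P_def by simp
    show "card P = point_degree E src tgt w" unfolding P_def using EPt dpos by simp
  next
    fix p assume "p \<in> P"
    then show "in_S V E lam p" unfolding P_def using e0 d12 dpos by auto
  next
    fix y assume "in_S V E lam y" "d \<le> pdist E src tgt lam y w"
    then show "\<exists>p\<in>P. pdist E src tgt lam y p < pdist E src tgt lam y w"
      unfolding P_def using branch_interior[OF net e0 _ dpos d12] EPt by blast
  qed
qed

lemma far:
  assumes w: "in_S V E lam w" and e: "e \<in> E" and dpos: "0 < d" and r: "d < r" "r < lam e - d"
    and c: "\<bar>r - (case w of EPt e' r' \<Rightarrow> if e' = e then r' else 0 | _ \<Rightarrow> 0)\<bar> > d"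
  shows "d \<le> pdist E src tgt lam (edge_pt src tgt lam e r) w"
proof -
  have "edge_pt src tgt lam e r = EPt e r" unfolding edge_pt_def using r dpos by auto
  moreover have "d < pdist E src tgt lam (EPt e r) w"
    by (rule pdist_lower[OF net e w r]) (use dpos c in auto)
  ultimately show ?thesis by simp
qed

end



theorem mainTheorem7:
  fixes V :: "'v set" and E :: "'e set" and src tgt :: "'e \<Rightarrow> 'v" and lam :: "'e \<Rightarrow> real"
    and n :: nat and x :: "nat \<Rightarrow> ('v, 'e) pt" and i :: nat
  assumes "network V E src tgt lam"
    and "\<forall>v\<in>V. vertex_degree E src tgt v \<noteq> 2"
    and "n \<ge> 2"
    and "is_NE V E src tgt lam n x"
    and "balanced E src tgt n x i"
  shows "\<forall>j\<in>{1..n}. payoff E src tgt lam n x i \<le> payoff E src tgt lam n x j"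
proof
  fix j assume j: "j \<in> {1..n}"
  note net = assms(1)
  have finE: "finite E" using net unfolding network_def by auto
  have lpos: "\<forall>e\<in>E. 0 < lam e" using net unfolding network_def by auto
  have iN: "i \<in> {1..n}" and mdeg: "card {k \<in> {1..n}. x k = x i} = point_degree E src tgt (x i)"
    using assms(5) unfolding balanced_def by auto
  define m where "m = card {k \<in> {1..n}. x k = x i}"
  have m1: "1 \<le> m"
  proof -
    have "{k \<in> {1..n}. x k = x i} \<noteq> {}" using iN by auto
    then show ?thesis unfolding m_def by (simp add: Suc_le_eq card_gt_0_iff)
  qed
  have xin: "\<forall>k\<in>{1..n}. in_S V E lam (x k)" and
    dev: "\<forall>p. in_S V E lam p \<longrightarrow> payoff E src tgt lam n (x(j := p)) j \<le> payoff E src tgt lam n x j"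
    using assms(4) j unfolding is_NE_def by auto
  have win: "in_S V E lam (x i)" using xin iN by auto
  define c where "c e = (case x i of EPt e' r' \<Rightarrow> if e' = e then r' else 0 | _ \<Rightarrow> 0)" for e
  define Q where "Q = insert 1 (lam ` E \<union> (case x i of EPt e0 r0 \<Rightarrow> {r0, lam e0 - r0} | _ \<Rightarrow> {}))"
  define d0 where "d0 = Min Q"
  have finQ: "finite Q" unfolding Q_def using finE by (cases "x i") auto
  have Qpos: "\<forall>q\<in>Q. 0 < q" unfolding Q_def using lpos win by (cases "x i") auto
  have d0pos: "0 < d0" unfolding d0_def using finQ Qpos by (subst Min_gr_iff) (auto simp: Q_def)
  have d0le: "d0 \<le> q" if "q \<in> Q" for q unfolding d0_def using finQ that by simp
  let ?ri = "payoff E src tgt lam n x i" and ?rj = "payoff E src tgt lam n x j"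
  have bound: "real m * ?ri \<le> real m * ?rj + 4 * d * real (card E)" if dpos: "0 < d" and dd0: "d < d0" for d
  proof -
    have dl: "\<forall>e\<in>E. d < lam e"
    proof
      fix e assume "e \<in> E"
      then have "lam e \<in> Q" unfolding Q_def by simp
      then show "d < lam e" using d0le[of "lam e"] dd0 by simp
    qed
    have dw: "d < r0 \<and> d < lam e0 - r0" if "x i = EPt e0 r0" for e0 r0
    proof -
      have "r0 \<in> Q" "lam e0 - r0 \<in> Q" unfolding Q_def using that by auto
      then show ?thesis using d0le[of r0] d0le[of "lam e0 - r0"] dd0 by auto
    qed
    obtain P where P: "finite P" "card P = point_degree E src tgt (x i)" "\<forall>p\<in>P. in_S V E lam p"
      "\<forall>y. in_S V E lam y \<longrightarrow> d \<le> pdist E src tgt lam y (x i) \<longrightarrow>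
         (\<exists>p\<in>P. pdist E src tgt lam y p < pdist E src tgt lam y (x i))"
      using key_branch[OF net win dpos dl dw] by blast
    have cardP: "card P = m" using P(2) mdeg unfolding m_def by simp
    define h :: "'e \<Rightarrow> real \<Rightarrow> real" where "h e r = indicator {0..d} r + indicator {lam e - d..lam e} r
        + indicator {c e - d..c e + d} r" for e r
    have edge: "real m * (LINT r:{0..lam e}|lborel. share E src tgt lam n x i (edge_pt src tgt lam e r))
       \<le> (\<Sum>p\<in>P. LINT r:{0..lam e}|lborel. share E src tgt lam n (x(j:=p)) j (edge_pt src tgt lam e r))
         + 4 * d" if eE: "e \<in> E" for e
    proof -
      have hint: "set_integrable lborel {0..lam e} (h e)"
      proof (rule sint_bdd[where K=3])
        show "h e \<in> borel_measurable borel" unfolding h_def by measurable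
      qed (auto simp: h_def split: split_indicator)
      have sint: "set_integrable lborel {0..lam e} (\<lambda>r. share E src tgt lam n z k (edge_pt src tgt lam e r))" for z k
      proof (rule sint_bdd[where K="1"])
        show "(\<lambda>r. share E src tgt lam n z k (edge_pt src tgt lam e r)) \<in> borel_measurable borel"
          by (rule share_meas)
      next
        fix r
        have nat1: "1 / (real a * real b) \<le> 1" for a b :: nat
        proof (cases "a * b = 0")
          case True then show ?thesis by auto
        next
          case False
          then have "1 \<le> real a * real b" by (metis of_nat_1 of_nat_le_iff of_nat_mult less_one not_le)
          then show ?thesis by simp
        qed
        have "share E src tgt lam n z k (edge_pt src tgt lam e r) \<le> 1"
          unfolding share_def Let_def using nat1 by simp
        then show "\<bar>share E src tgt lam n z k (edge_pt src tgt lam e r)\<bar> \<le> 1" using share_nonneg[of E src tgt lam n z k "edge_pt src tgt lam e r"] by simp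
      qed
      have pw: "real m * share E src tgt lam n x i (edge_pt src tgt lam e r)
          \<le> (\<Sum>p\<in>P. share E src tgt lam n (x(j:=p)) j (edge_pt src tgt lam e r)) + h e r"
        if r: "r \<in> {0..lam e}" for r
      proof -
        let ?y = "edge_pt src tgt lam e r"
        have yS: "in_S V E lam ?y" using edge_pt_in_S[OF net eE r] .
        have sle: "real m * share E src tgt lam n x i ?y \<le> 1"
          using share_le[OF iN, of E src tgt lam x ?y] m1 unfolding m_def[symmetric]
          by (simp add: field_simps)
        have snn: "0 \<le> (\<Sum>p\<in>P. share E src tgt lam n (x(j:=p)) j ?y)"
          by (intro sum_nonneg) (simp add: share_nonneg)
        have hnn: "0 \<le> h e r" unfolding h_def by simp
        show ?thesis
        proof (cases "r \<in> {0..d} \<or> r \<in> {lam e - d..lam e} \<or> r \<in> {c e - d..c e + d}")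
          case True
          then have "1 \<le> h e r" unfolding h_def by (auto split: split_indicator)
          then show ?thesis using sle snn by linarith
        next
          case False
          then have rr: "d < r" "r < lam e - d" "\<bar>r - c e\<bar> > d" using r by auto
          have fr: "d \<le> pdist E src tgt lam ?y (x i)"
            by (rule far[OF net win eE dpos rr(1,2)]) (use rr(3) in \<open>simp add: c_def\<close>)
          show ?thesis
          proof (cases "share E src tgt lam n x i ?y = 0")
            case True then show ?thesis using snn hnn by simp
          next
            case False
            then have spos: "0 < share E src tgt lam n x i ?y" using share_nonneg[of E src tgt lam n x i ?y] by simp
            obtain p where p: "p \<in> P" "pdist E src tgt lam ?y p < pdist E src tgt lam ?y (x i)"
              using P(4) yS fr by blast
            have "\<forall>k\<in>{1..n}. k \<noteq> j \<longrightarrow> pdist E src tgt lam ?y p < pdist E src tgt lam ?y (x k)"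
              using share_pos_min[OF iN spos] p(2) by fastforce
            then have one: "share E src tgt lam n (x(j:=p)) j ?y = 1" using share_one[OF j] by blast
            have "share E src tgt lam n (x(j:=p)) j ?y \<le> (\<Sum>p\<in>P. share E src tgt lam n (x(j:=p)) j ?y)"
              by (rule member_le_sum[OF p(1)]) (simp_all add: share_nonneg P(1))
            then show ?thesis using one sle hnn by linarith
          qed
        qed
      qed
      have "real m * (LINT r:{0..lam e}|lborel. share E src tgt lam n x i (edge_pt src tgt lam e r))
        \<le> (\<Sum>p\<in>P. LINT r:{0..lam e}|lborel. share E src tgt lam n (x(j:=p)) j (edge_pt src tgt lam e r))
          + (LINT r:{0..lam e}|lborel. h e r)"
        by (rule int_main[OF sint hint sint pw])
      moreover have "(LINT r:{0..lam e}|lborel. h e r) \<le> 4 * d"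
      proof -
        have i1: "set_integrable lborel {0..lam e} (\<lambda>r. indicator {a..b} r :: real)" for a b
        proof (rule sint_bdd[where K=1])
          show "(\<lambda>r. indicator {a..b} r :: real) \<in> borel_measurable borel" by measurable
        qed (auto split: split_indicator)
        have "(LINT r:{0..lam e}|lborel. h e r) = (LINT r:{0..lam e}|lborel. indicator {0..d} r)
          + (LINT r:{0..lam e}|lborel. indicator {lam e - d..lam e} r) + (LINT r:{0..lam e}|lborel. indicator {c e - d..c e + d} r)"
          unfolding h_def using i1 by (simp add: set_integral_add)
        also have "\<dots> \<le> d + d + 2 * d"
          using sint_ind[of 0 d 0 "lam e"] sint_ind[of "lam e - d" "lam e" 0 "lam e"] sint_ind[of "c e - d" "c e + d" 0 "lam e"] dpos
          by (intro add_mono) auto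
        finally show ?thesis by simp
      qed
      ultimately show ?thesis by linarith
    qed
    have "real m * ?ri = (\<Sum>e\<in>E. real m * (LINT r:{0..lam e}|lborel. share E src tgt lam n x i (edge_pt src tgt lam e r)))"
      unfolding payoff_def by (simp add: sum_distrib_left)
    also have "\<dots> \<le> (\<Sum>e\<in>E. (\<Sum>p\<in>P. LINT r:{0..lam e}|lborel. share E src tgt lam n (x(j:=p)) j (edge_pt src tgt lam e r)) + 4 * d)"
      by (rule sum_mono) (rule edge)
    also have "\<dots> = (\<Sum>p\<in>P. payoff E src tgt lam n (x(j:=p)) j) + 4 * d * real (card E)"
      unfolding payoff_def by (simp add: sum.distrib sum.swap[of _ E P])
    also have "(\<Sum>p\<in>P. payoff E src tgt lam n (x(j:=p)) j) \<le> (\<Sum>p\<in>P. ?rj)"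
      by (rule sum_mono) (use dev P(3) in auto)
    also have "(\<Sum>p\<in>P. ?rj) = real m * ?rj" using cardP by simp
    finally show ?thesis by simp
  qed
  show "?ri \<le> ?rj"
  proof (rule ccontr)
    assume "\<not> ?ri \<le> ?rj"
    then have D: "0 < real m * ?ri - real m * ?rj" using m1 by (simp add: algebra_simps)
    define d where "d = min (d0 / 2) ((real m * ?ri - real m * ?rj) / (8 * (real (card E) + 1)))"
    have dpos: "0 < d" unfolding d_def using d0pos D by auto
    have "d < d0" unfolding d_def using d0pos by auto
    from bound[OF dpos this] have b: "real m * ?ri \<le> real m * ?rj + 4 * d * real (card E)" .
    define K where "K = 8 * (real (card E) + 1)"
    have Kpos: "0 < K" unfolding K_def by simp
    have "d \<le> (real m * ?ri - real m * ?rj) / K" unfolding d_def K_def by simp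
    then have dK: "d * K \<le> real m * ?ri - real m * ?rj" using Kpos by (simp add: pos_le_divide_eq)
    have a1: "0 \<le> d * real (card E)" using dpos by simp
    have a2: "d * K = 8 * d + 8 * (d * real (card E))" unfolding K_def by (simp add: algebra_simps)
    have a3: "4 * d * real (card E) = 4 * (d * real (card E))" by simp
    have "4 * d * real (card E) < d * K" unfolding a2 a3 using a1 dpos by linarith
    then have "4 * d * real (card E) < real m * ?ri - real m * ?rj" using dK by linarith
    then show False using b by linarith
  qed
qed


end
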